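(* Fix $\alpha\in\mathbb{D}\setminus\{0\}$, let $\psi(z)=\frac{\sqrt{1-|\alpha|^2}}{1-\bar\alpha z}$, $\theta(z)=\frac{\bar\alpha}{\alpha}\frac{\alpha-z}{1-\bar\alpha z}$, and let $C_{\psi,\theta}$ be the conjugation on $H^2(\mathbb{D})$ given by $(C_{\psi,\theta}f)(z)=\psi(z)\overline{f(\overline{\theta(z)})}$. Let $\varphi(z)=\varphi_{-1}\bar z+\varphi_0+\varphi_1z$ on $\mathbb{T}$ with $\varphi_{-1},\varphi_0,\varphi_1\in\mathbb{C}$. Then $T_\varphi$ is $C_{\psi,\theta}$-symmetric if and only if $\varphi$ is a constant function.
   Context: A conjugation is an anti-linear, involutive, isometric map; $T$ is $C$-symmetric if $CT^*C=T$. $H^2(\mathbb{D})$ is the Hardy space of the disc and $T_\varphi f=P_{H^2(\mathbb{D})}(\varphi f)$ for $\varphi\in L^\infty(\mathbb{T})$. *)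

theory Defs
  imports "HOL-Analysis.Analysis"
begin

definition taylor_coeff :: "(complex \<Rightarrow> complex) \<Rightarrow> nat \<Rightarrow> complex" where
  "taylor_coeff f n = (deriv ^^ n) f 0 / of_nat (fact n)"

text \<open>The Hardy space H^2 of the unit disc: holomorphic functions on the disc whose
  Taylor coefficients are square summable (only values on the disc matter).\<close>
definition H2 :: "(complex \<Rightarrow> complex) set" where
  "H2 = {f. f holomorphic_on ball 0 1 \<and> summable (\<lambda>n. (cmod (taylor_coeff f n))^2)}"

definition h2_inner :: "(complex \<Rightarrow> complex) \<Rightarrow> (complex \<Rightarrow> complex) \<Rightarrow> complex" where
  "h2_inner f g = (\<Sum>n. taylor_coeff f n * cnj (taylor_coeff g n))"

text \<open>Toeplitz operator T_phi f = P_{H^2}(phi f), for a symbol phi given by its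
  (finitely supported) Fourier coefficients phihat : int => complex. The n-th Fourier
  coefficient of phi f is sum_k phihat(n-k) a_k; the projection keeps n >= 0.\<close>
definition toeplitz :: "(int \<Rightarrow> complex) \<Rightarrow> (complex \<Rightarrow> complex) \<Rightarrow> (complex \<Rightarrow> complex)" where
  "toeplitz phihat f = (\<lambda>z. \<Sum>n. (\<Sum>k. phihat (int n - int k) * taylor_coeff f k) * z ^ n)"

text \<open>Fourier coefficients of phi(z) = phim1 * conj z + phi0 + phi1 * z on the circle.\<close>
definition trig_coeffs :: "complex \<Rightarrow> complex \<Rightarrow> complex \<Rightarrow> int \<Rightarrow> complex" where
  "trig_coeffs phim1 phi0 phi1 k =
     (if k = -1 then phim1 else if k = 0 then phi0 else if k = 1 then phi1 else 0)"

definition is_adjoint ::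
  "((complex \<Rightarrow> complex) \<Rightarrow> (complex \<Rightarrow> complex)) \<Rightarrow> ((complex \<Rightarrow> complex) \<Rightarrow> (complex \<Rightarrow> complex)) \<Rightarrow> bool" where
  "is_adjoint T S \<longleftrightarrow> (\<forall>f\<in>H2. T f \<in> H2 \<and> S f \<in> H2) \<and>
     (\<forall>f\<in>H2. \<forall>g\<in>H2. h2_inner (T f) g = h2_inner f (S g))"

definition C_symmetric ::
  "((complex \<Rightarrow> complex) \<Rightarrow> (complex \<Rightarrow> complex)) \<Rightarrow> ((complex \<Rightarrow> complex) \<Rightarrow> (complex \<Rightarrow> complex)) \<Rightarrow> bool" where
  "C_symmetric C T \<longleftrightarrow> (\<exists>S. is_adjoint T S \<and> (\<forall>f\<in>H2. \<forall>z\<in>ball 0 1. C (S (C f)) z = T f z))"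

definition psi_fun :: "complex \<Rightarrow> complex \<Rightarrow> complex" where
  "psi_fun \<alpha> z = complex_of_real (sqrt (1 - (cmod \<alpha>)^2)) / (1 - cnj \<alpha> * z)"

definition theta_fun :: "complex \<Rightarrow> complex \<Rightarrow> complex" where
  "theta_fun \<alpha> z = (cnj \<alpha> / \<alpha>) * ((\<alpha> - z) / (1 - cnj \<alpha> * z))"

definition C_psi_theta :: "complex \<Rightarrow> (complex \<Rightarrow> complex) \<Rightarrow> (complex \<Rightarrow> complex)" where
  "C_psi_theta \<alpha> f = (\<lambda>z. psi_fun \<alpha> z * cnj (f (cnj (theta_fun \<alpha> z))))"

end

theory Submission imports Defs "HOL-Complex_Analysis.Complex_Analysis" begin

lemma L3:
  fixes c :: "nat \<Rightarrow> complex" and f :: "complex \<Rightarrow> complex"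
  assumes S: "\<And>z. z \<in> ball 0 1 \<Longrightarrow> (\<lambda>n. c n * z^n) sums f z"
  shows "f holomorphic_on ball 0 1" and "taylor_coeff f n = c n"
proof -
  define F where "F = Abs_fps c"
  have r: "fps_conv_radius F \<ge> 1"
    unfolding fps_conv_radius_def F_def fps_nth_Abs_fps
  proof (rule conv_radius_geI_ex')
    fix r :: real assume "0 < r" "ereal r < 1"
    then have "of_real r \<in> ball (0::complex) 1" by auto
    from S[OF this] show "summable (\<lambda>n. c n * of_real r ^ n)" by (auto simp: sums_iff)
  qed
  have ev: "\<And>z. z \<in> ball 0 1 \<Longrightarrow> eval_fps F z = f z"
    unfolding eval_fps_def F_def fps_nth_Abs_fps using S sums_unique by metis
  have sub: "ball (0::complex) 1 \<subseteq> eball 0 (fps_conv_radius F)"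
  proof (rule subsetI)
    fix x :: complex assume "x \<in> ball 0 1"
    then have "ereal (dist 0 x) < 1" by (simp add: one_ereal_def)
    then have "ereal (dist 0 x) < fps_conv_radius F" using r by (rule order_less_le_trans)
    then show "x \<in> eball 0 (fps_conv_radius F)" by simp
  qed
  have "eval_fps F holomorphic_on ball 0 1" by (rule holomorphic_on_eval_fps[OF sub])
  then show "f holomorphic_on ball 0 1" using ev holomorphic_cong by metis
  have "f has_fps_expansion F"
    unfolding has_fps_expansion_def
  proof
    show "fps_conv_radius F > 0" using r by (metis order_less_le_trans zero_less_one zero_ereal_def one_ereal_def less_ereal.simps(1))
    show "\<forall>\<^sub>F z in nhds 0. eval_fps F z = f z"
      proof -
      have "\<forall>\<^sub>F z in nhds 0. z \<in> ball (0::complex) 1"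
        by (rule eventually_nhds_in_open) auto
      then show ?thesis by eventually_elim (use ev in auto)
    qed
  qed
  from fps_nth_fps_expansion[OF this, of n] show "taylor_coeff f n = c n"
    by (simp add: taylor_coeff_def F_def)
qed

lemma L2:
  assumes "f holomorphic_on ball 0 1" "z \<in> ball 0 1"
  shows "(\<lambda>n. taylor_coeff f n * z^n) sums f z"
  using holomorphic_power_series[OF assms] by (simp add: taylor_coeff_def)

lemma ss: "complex_of_real (sqrt (1 - (cmod a)^2)) * complex_of_real (sqrt (1 - (cmod a)^2)) = 1 - a * cnj a"
  if "cmod a < 1"
proof -
  have "(cmod a)^2 \<le> 1" using that by (simp add: abs_square_le_1 less_imp_le)
  then have "sqrt (1 - (cmod a)^2) * sqrt (1 - (cmod a)^2) = 1 - (cmod a)^2" by simp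
  then have "complex_of_real (sqrt (1 - (cmod a)^2)) * complex_of_real (sqrt (1 - (cmod a)^2)) = complex_of_real (1 - (cmod a)^2)"
    by (metis of_real_mult)
  also have "\<dots> = 1 - a * cnj a" using complex_norm_square[of a] by simp
  finally show ?thesis .
qed

lemma den_nz: "cmod a < 1 \<Longrightarrow> cmod z < 1 \<Longrightarrow> 1 - a * z \<noteq> 0"
proof
  assume "cmod a < 1" "cmod z < 1" "1 - a * z = 0"
  then have "a * z = 1" by simp
  then have "cmod a * cmod z = 1" by (metis norm_mult norm_one)
  moreover have "cmod a * cmod z < 1"
    using \<open>cmod a < 1\<close> \<open>cmod z < 1\<close> by (metis abs_norm_cancel le_less_trans mult_left_le_one_le norm_ge_zero order.strict_implies_order mult_le_one less_le mult_strict_mono' norm_ge_zero zero_less_one)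
  ultimately show False by simp
qed

lemma field_inv:
  fixes a b z :: complex
  assumes "a \<noteq> 0" "b \<noteq> 0" "1 - b * z \<noteq> 0" "1 - a * b \<noteq> 0"
  shows "(a/b)*((b - (b/a)*((a-z)/(1-b*z)))/(1 - a*((b/a)*((a-z)/(1-b*z))))) = z"
proof -
  have 1: "b - (b/a)*((a-z)/(1-b*z)) = (b/a) * z * (1 - a*b) / (1 - b*z)"
    using assms by (simp add: field_simps)
  have 2: "1 - a*((b/a)*((a-z)/(1-b*z))) = (1 - a*b)/(1-b*z)"
    using assms by (simp add: field_simps)
  have 3: "((b/a) * z * (1 - a*b) / (1 - b*z)) / ((1 - a*b)/(1-b*z)) = (b/a) * z"
  proof -
    have g: "\<And>d e c :: complex. d \<noteq> 0 \<Longrightarrow> e \<noteq> 0 \<Longrightarrow> (c*e/d)/(e/d) = c" by simp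
    show ?thesis by (rule g[OF assms(3) assms(4)])
  qed
  show ?thesis unfolding 1 2 3 using assms by simp
qed

lemma theta_inv:
  assumes a: "cmod a < 1" "a \<noteq> 0" and z: "cmod z < 1"
  shows "cnj (theta_fun a (cnj (theta_fun a z))) = z"
proof -
  have d1: "1 - cnj a * z \<noteq> 0" using den_nz[of "cnj a" z] a z by simp
  have d2: "1 - a * cnj a \<noteq> 0" using den_nz[of a "cnj a"] a by simp
  have ca: "cnj a \<noteq> 0" using a by simp
  have "cnj (theta_fun a (cnj (theta_fun a z))) = (a/cnj a)*((cnj a - theta_fun a z)/(1 - a*theta_fun a z))"
    by (simp add: theta_fun_def)
  also have "\<dots> = z" unfolding theta_fun_def by (rule field_inv[OF a(2) ca d1 d2])
  finally show ?thesis .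
qed

lemma psi_inv:
  assumes a: "cmod a < 1" "a \<noteq> 0" and z: "cmod z < 1"
  shows "psi_fun a z * cnj (psi_fun a (cnj (theta_fun a z))) = 1"
proof -
  have d1: "1 - cnj a * z \<noteq> 0" using den_nz[of "cnj a" z] a z by simp
  have d2: "1 - a * cnj a \<noteq> 0" using den_nz[of a "cnj a"] a by simp
  have e: "1 - a * theta_fun a z = (1 - a * cnj a) / (1 - cnj a * z)"
    unfolding theta_fun_def using d1 a(2) by (simp add: field_simps)
  show ?thesis
    unfolding psi_fun_def using ss[OF a(1)] e d1 d2 by (simp add: field_simps)
qed

lemma sums_delta: "(\<lambda>n. (if n = m then 1 else 0) * g n) sums (g m :: complex)"
proof -
  have "(\<lambda>n. (if n = m then 1 else 0) * g n) = (\<lambda>n. if n = m then g n else 0)" by auto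
  then show ?thesis using sums_single[of m g] by simp
qed

lemma mono_coeff: "taylor_coeff (\<lambda>z. z^m) n = (if n = m then 1 else 0)"
  by (rule L3(2)) (rule sums_delta)

lemma mono_H2: "(\<lambda>z::complex. z^m) \<in> H2"
proof -
  have "(\<lambda>z::complex. z^m) holomorphic_on ball 0 1" by (rule L3(1)) (rule sums_delta)
  moreover have "summable (\<lambda>n. (cmod (taylor_coeff (\<lambda>z. z^m) n))^2)"
  proof -
    have "(\<lambda>n. (cmod (taylor_coeff (\<lambda>z::complex. z^m) n))^2) = (\<lambda>n. if n = m then 1 else 0)"
      by (auto simp: mono_coeff)
    then show ?thesis using sums_single[of m "\<lambda>_. 1::real"] by (simp add: sums_iff)
  qed
  ultimately show ?thesis by (simp add: H2_def)
qed

lemma trig_zero: "k \<noteq> -1 \<Longrightarrow> k \<noteq> 0 \<Longrightarrow> k \<noteq> 1 \<Longrightarrow> trig_coeffs x y w k = 0"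
  by (simp add: trig_coeffs_def)

lemma toeplitz_mono_sums:
  "(\<lambda>n. trig_coeffs x y w (int n - int m) * z^n) sums toeplitz (trig_coeffs x y w) (\<lambda>z. z^m) z"
proof -
  have inner: "(\<Sum>k. trig_coeffs x y w (int n - int k) * taylor_coeff (\<lambda>z. z^m) k) = trig_coeffs x y w (int n - int m)" for n
  proof -
    have "(\<lambda>k. trig_coeffs x y w (int n - int k) * taylor_coeff (\<lambda>z. z^m) k) = (\<lambda>k. (if k = m then 1 else 0) * trig_coeffs x y w (int n - int k))"
      by (auto simp: mono_coeff)
    then show ?thesis using sums_delta[of m "\<lambda>k. trig_coeffs x y w (int n - int k)"] sums_unique by metis
  qed
  have "(\<lambda>n. trig_coeffs x y w (int n - int m) * z^n) sums (\<Sum>n\<le>Suc m. trig_coeffs x y w (int n - int m) * z^n)"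
    by (rule sums_finite) (auto simp: trig_coeffs_def)
  then have "(\<lambda>n. trig_coeffs x y w (int n - int m) * z^n) sums (\<Sum>n. trig_coeffs x y w (int n - int m) * z^n)"
    using sums_unique by metis
  then show ?thesis unfolding toeplitz_def inner .
qed

lemma toeplitz_mono_coeff:
  "taylor_coeff (toeplitz (trig_coeffs x y w) (\<lambda>z. z^m)) n = trig_coeffs x y w (int n - int m)"
  by (rule L3(2)) (rule toeplitz_mono_sums)

lemma trig_sum:
  "(\<Sum>n\<le>Suc m. trig_coeffs x y w (int n - int m) * X n) =
     y * X m + w * X (Suc m) + (if m = 0 then 0 else x * X (m - 1))"
proof (cases m)
  case 0
  then show ?thesis by (simp add: trig_coeffs_def)
next
  case (Suc j)
  have z: "(\<Sum>n<j. trig_coeffs x y w (int n - int m) * X n) = 0"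
    using Suc by (intro sum.neutral) (auto simp: trig_coeffs_def)
  have "(\<Sum>n\<le>Suc m. trig_coeffs x y w (int n - int m) * X n) =
     (\<Sum>n<j. trig_coeffs x y w (int n - int m) * X n) + trig_coeffs x y w (int j - int m) * X j
       + trig_coeffs x y w (int (Suc j) - int m) * X (Suc j) + trig_coeffs x y w (int (Suc (Suc j)) - int m) * X (Suc (Suc j))"
    using Suc by (simp add: lessThan_Suc_atMost[symmetric] sum.lessThan_Suc)
  also have "\<dots> = y * X m + w * X (Suc m) + (if m = 0 then 0 else x * X (m - 1))"
    using Suc z by (simp add: trig_coeffs_def)
  finally show ?thesis .
qed

lemma psi_sums:
  assumes a: "cmod a < 1" and z: "z \<in> ball 0 1"
  shows "(\<lambda>n. (complex_of_real (sqrt (1 - (cmod a)^2)) * cnj a ^ n) * z^n) sums psi_fun a z"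
proof -
  have "norm (cnj a * z) < 1" using a z
    by (simp add: norm_mult) (metis abs_norm_cancel mult_le_one mult_strict_mono' norm_ge_zero less_le mult_less_cancel_left1 less_trans zero_less_one less_imp_le mult_left_le_one_le le_less_trans)
  from geometric_sums[OF this] have "(\<lambda>n. (cnj a * z)^n) sums (1 / (1 - cnj a * z))" .
  from sums_mult[OF this, of "complex_of_real (sqrt (1 - (cmod a)^2))"]
  show ?thesis by (simp add: psi_fun_def power_mult_distrib mult.assoc)
qed

lemma psi_coeff: "cmod a < 1 \<Longrightarrow> taylor_coeff (psi_fun a) n = complex_of_real (sqrt (1 - (cmod a)^2)) * cnj a ^ n"
  by (rule L3(2)) (rule psi_sums)

lemma psi_H2: assumes a: "cmod a < 1" shows "psi_fun a \<in> H2"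
proof -
  have "psi_fun a holomorphic_on ball 0 1" by (rule L3(1)) (rule psi_sums[OF a])
  moreover have "summable (\<lambda>n. (cmod (taylor_coeff (psi_fun a) n))^2)"
  proof -
    have "(\<lambda>n. (cmod (taylor_coeff (psi_fun a) n))^2) = (\<lambda>n. (cmod (complex_of_real (sqrt (1 - (cmod a)^2))))^2 * ((cmod a)^2)^n)"
      by (simp add: psi_coeff[OF a] norm_mult norm_power power_mult_distrib power_mult[symmetric] mult.commute)
    moreover have "summable (\<lambda>n. ((cmod a)^2)^n)"
      by (rule summable_geometric) (use a in \<open>simp add: abs_square_less_1\<close>)
    ultimately show ?thesis by (simp add: summable_mult)
  qed
  ultimately show ?thesis by (simp add: H2_def)
qed

lemma backward:
  assumes a: "cmod a < 1" "a \<noteq> 0"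
  shows "C_symmetric (C_psi_theta a) (toeplitz (trig_coeffs 0 c 0))"
proof -
  define P where "P = trig_coeffs 0 c 0"
  define S where "S = (\<lambda>(g::complex\<Rightarrow>complex) z. cnj c * g z)"
  have inner: "(\<Sum>k. P (int n - int k) * taylor_coeff f k) = c * taylor_coeff f n" for f n
  proof -
    have "(\<lambda>k. P (int n - int k) * taylor_coeff f k) = (\<lambda>k. (if k = n then 1 else 0) * (c * taylor_coeff f k))"
      by (auto simp: P_def trig_coeffs_def)
    then show ?thesis using sums_delta[of n "\<lambda>k. c * taylor_coeff f k"] sums_unique by metis
  qed
  have Tsum: "(\<lambda>n. (c * taylor_coeff f n) * z^n) sums toeplitz P f z \<and> toeplitz P f z = c * f z"
    if f: "f \<in> H2" and z: "z \<in> ball 0 1" for f z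
  proof -
    have "(\<lambda>n. taylor_coeff f n * z^n) sums f z" using f z by (intro L2) (auto simp: H2_def)
    from sums_mult[OF this, of c] have s: "(\<lambda>n. (c * taylor_coeff f n) * z^n) sums (c * f z)"
      by (simp add: mult.assoc)
    have "toeplitz P f z = (\<Sum>n. (c * taylor_coeff f n) * z^n)" by (simp add: toeplitz_def inner)
    with s sums_unique show ?thesis by metis
  qed
  have Ssum: "(\<lambda>n. (cnj c * taylor_coeff g n) * z^n) sums S g z"
    if g: "g \<in> H2" and z: "z \<in> ball 0 1" for g z
  proof -
    have "(\<lambda>n. taylor_coeff g n * z^n) sums g z" using g z by (intro L2) (auto simp: H2_def)
    from sums_mult[OF this, of "cnj c"] show ?thesis by (simp add: mult.assoc S_def)
  qed
  have TH2: "toeplitz P f \<in> H2" and Tc: "taylor_coeff (toeplitz P f) n = c * taylor_coeff f n" if f: "f \<in> H2" for f n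
  proof -
    have tc: "taylor_coeff (toeplitz P f) k = c * taylor_coeff f k" for k by (rule L3(2)) (use Tsum[OF f] in blast)
    then show "taylor_coeff (toeplitz P f) n = c * taylor_coeff f n" .
    have "toeplitz P f holomorphic_on ball 0 1" by (rule L3(1)[of "\<lambda>n. c * taylor_coeff f n"]) (use Tsum[OF f] in blast)
    moreover have "summable (\<lambda>n. (cmod (taylor_coeff (toeplitz P f) n))^2)"
    proof -
      have "(\<lambda>n. (cmod (taylor_coeff (toeplitz P f) n))^2) = (\<lambda>n. (cmod c)^2 * (cmod (taylor_coeff f n))^2)"
        by (auto simp: tc norm_mult power_mult_distrib)
      then show ?thesis using f by (simp add: H2_def summable_mult)
    qed
    ultimately show "toeplitz P f \<in> H2" by (simp add: H2_def)
  qed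
  have SH2: "S g \<in> H2" and Sc: "taylor_coeff (S g) n = cnj c * taylor_coeff g n" if g: "g \<in> H2" for g n
  proof -
    have tc: "taylor_coeff (S g) k = cnj c * taylor_coeff g k" for k by (rule L3(2)) (use Ssum[OF g] in blast)
    then show "taylor_coeff (S g) n = cnj c * taylor_coeff g n" .
    have "S g holomorphic_on ball 0 1" by (rule L3(1)[of "\<lambda>n. cnj c * taylor_coeff g n"]) (use Ssum[OF g] in blast)
    moreover have "summable (\<lambda>n. (cmod (taylor_coeff (S g) n))^2)"
    proof -
      have "(\<lambda>n. (cmod (taylor_coeff (S g) n))^2) = (\<lambda>n. (cmod c)^2 * (cmod (taylor_coeff g n))^2)"
        by (auto simp: tc norm_mult power_mult_distrib)
      then show ?thesis using g by (simp add: H2_def summable_mult)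
    qed
    ultimately show "S g \<in> H2" by (simp add: H2_def)
  qed
  have adj: "is_adjoint (toeplitz P) S"
    unfolding is_adjoint_def
  proof (intro conjI ballI)
    fix f assume "f \<in> H2" then show "toeplitz P f \<in> H2" "S f \<in> H2" using TH2 SH2 by auto
  next
    fix f g assume f: "f \<in> H2" and g: "g \<in> H2"
    show "h2_inner (toeplitz P f) g = h2_inner f (S g)"
      unfolding h2_inner_def using Tc[OF f] Sc[OF g] by (simp add: mult.assoc mult.left_commute)
  qed
  have main: "C_psi_theta a (S (C_psi_theta a f)) z = toeplitz P f z" if f: "f \<in> H2" and z: "z \<in> ball 0 1" for f z
  proof -
    have zz: "cmod z < 1" using z by simp
    have "C_psi_theta a (S (C_psi_theta a f)) z =
        c * (psi_fun a z * cnj (psi_fun a (cnj (theta_fun a z)))) * f (cnj (theta_fun a (cnj (theta_fun a z))))"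
      by (simp add: C_psi_theta_def S_def)
    also have "\<dots> = c * f z" using theta_inv[OF a zz] psi_inv[OF a zz] by simp
    finally show ?thesis using Tsum[OF f z] by simp
  qed
  show ?thesis unfolding C_symmetric_def P_def[symmetric] using adj main by blast
qed

lemma forward:
  assumes a: "cmod a < 1" "a \<noteq> 0"
    and cs: "C_symmetric (C_psi_theta a) (toeplitz (trig_coeffs x y w))"
  shows "x = 0 \<and> w = 0"
proof -
  define P where "P = trig_coeffs x y w"
  define s where "s = complex_of_real (sqrt (1 - (cmod a)^2))"
  define b where "b = cnj a"
  obtain S where adj: "is_adjoint (toeplitz P) S"
    and sym: "\<And>f z. f \<in> H2 \<Longrightarrow> z \<in> ball 0 1 \<Longrightarrow> C_psi_theta a (S (C_psi_theta a f)) z = toeplitz P f z"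
    using cs unfolding C_symmetric_def P_def by blast
  have psiH: "psi_fun a \<in> H2" by (rule psi_H2[OF a(1)])
  have SH: "S (psi_fun a) \<in> H2" using adj psiH by (simp add: is_adjoint_def)
  have cs_s: "cnj s = s" by (simp add: s_def)
  have tc: "taylor_coeff (S (psi_fun a)) m =
     cnj y * (s * b^m) + cnj w * (s * b^Suc m) + (if m = 0 then 0 else cnj x * (s * b^(m-1)))" for m
  proof -
    have e: "h2_inner (toeplitz P (\<lambda>z. z^m)) (psi_fun a) = h2_inner (\<lambda>z. z^m) (S (psi_fun a))"
      using adj mono_H2 psiH by (simp add: is_adjoint_def)
    have "h2_inner (\<lambda>z. z^m) (S (psi_fun a)) = cnj (taylor_coeff (S (psi_fun a)) m)"
      unfolding h2_inner_def mono_coeff using sums_delta[of m "\<lambda>n. cnj (taylor_coeff (S (psi_fun a)) n)"] sums_unique by metis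
    moreover have "h2_inner (toeplitz P (\<lambda>z. z^m)) (psi_fun a) = (\<Sum>n\<le>Suc m. P (int n - int m) * (s * a^n))"
    proof -
      have "(\<lambda>n. P (int n - int m) * (s * a^n)) sums (\<Sum>n\<le>Suc m. P (int n - int m) * (s * a^n))"
        by (rule sums_finite) (auto simp: P_def trig_coeffs_def)
      moreover have "(\<lambda>n. taylor_coeff (toeplitz P (\<lambda>z. z^m)) n * cnj (taylor_coeff (psi_fun a) n)) = (\<lambda>n. P (int n - int m) * (s * a^n))"
        unfolding P_def toeplitz_mono_coeff psi_coeff[OF a(1)] s_def[symmetric] by (simp add: cs_s)
      ultimately show ?thesis unfolding h2_inner_def using sums_unique by metis
    qed
    ultimately have "cnj (taylor_coeff (S (psi_fun a)) m) = y * (s * a^m) + w * (s * a^Suc m) + (if m = 0 then 0 else x * (s * a^(m-1)))"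
      using e trig_sum[of x y w m "\<lambda>n. s * a^n"] unfolding P_def by simp
    then have "taylor_coeff (S (psi_fun a)) m = cnj (y * (s * a^m) + w * (s * a^Suc m) + (if m = 0 then 0 else x * (s * a^(m-1))))"
      by (metis complex_cnj_cnj)
    then show ?thesis by (simp add: cs_s b_def)
  qed
  have Sval: "S (psi_fun a) v = s * (cnj y + cnj w * b + cnj x * v) / (1 - b * v)" if v: "v \<in> ball 0 1" for v
  proof -
    have bv: "norm (b * v) < 1" using a v unfolding b_def
      by (simp add: norm_mult) (metis abs_norm_cancel mult_le_one mult_strict_mono' norm_ge_zero less_le mult_less_cancel_left1 less_trans zero_less_one less_imp_le mult_left_le_one_le le_less_trans)
    have g: "(\<lambda>m. (b * v)^m) sums (1 / (1 - b * v))" by (rule geometric_sums[OF bv])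
    have G1: "(\<lambda>m. s * (cnj y + cnj w * b) * (b * v)^m) sums (s * (cnj y + cnj w * b) * (1 / (1 - b * v)))"
      by (rule sums_mult[OF g])
    define G2 where "G2 = (\<lambda>m::nat. if m = 0 then 0 else s * cnj x * v * (b * v)^(m-1))"
    have "(\<lambda>m. G2 (Suc m)) sums (s * cnj x * v * (1 / (1 - b * v)))"
      unfolding G2_def using sums_mult[OF g, of "s * cnj x * v"] by simp
    then have G2s: "G2 sums (s * cnj x * v * (1 / (1 - b * v)))"
      using sums_Suc_iff[of G2 "s * cnj x * v * (1 / (1 - b * v))"] by (simp add: G2_def)
    from sums_add[OF G1 G2s] have "(\<lambda>m. s * (cnj y + cnj w * b) * (b * v)^m + G2 m) sums
        (s * (cnj y + cnj w * b) * (1 / (1 - b * v)) + s * cnj x * v * (1 / (1 - b * v)))" .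
    moreover have "(\<lambda>m. s * (cnj y + cnj w * b) * (b * v)^m + G2 m) = (\<lambda>m. taylor_coeff (S (psi_fun a)) m * v^m)"
    proof
      fix m show "s * (cnj y + cnj w * b) * (b * v)^m + G2 m = taylor_coeff (S (psi_fun a)) m * v^m"
      proof (cases m)
        case 0 then show ?thesis by (simp add: tc G2_def algebra_simps)
      next
        case (Suc j) then show ?thesis by (simp add: tc G2_def algebra_simps power_mult_distrib)
      qed
    qed
    moreover have "(\<lambda>m. taylor_coeff (S (psi_fun a)) m * v^m) sums S (psi_fun a) v"
      using SH v by (intro L2) (auto simp: H2_def)
    ultimately have "S (psi_fun a) v = s * (cnj y + cnj w * b) * (1 / (1 - b * v)) + s * cnj x * v * (1 / (1 - b * v))"
      using sums_unique2 by metis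
    also have "\<dots> = s * (cnj y + cnj w * b + cnj x * v) / (1 - b * v)"
      by (simp add: add_divide_distrib[symmetric] algebra_simps)
    finally show ?thesis .
  qed
  define f1 where "f1 = (\<lambda>z::complex. z^0)"
  have Cf1: "C_psi_theta a f1 = psi_fun a" by (rule ext) (simp add: C_psi_theta_def f1_def)
  have key: "y + w * a + x * theta_fun a z = y + w * z" if z: "z \<in> ball 0 1" and v: "cnj (theta_fun a z) \<in> ball 0 1" for z
  proof -
    have zz: "cmod z < 1" using z by simp
    have T1: "toeplitz P f1 z = y + w * z"
    proof -
      have s2: "(\<lambda>n. trig_coeffs x y w (int n - int 0) * z^n) sums (\<Sum>n\<le>Suc 0. trig_coeffs x y w (int n - int 0) * z^n)"
        by (rule sums_finite) (auto simp: trig_coeffs_def)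
      have "toeplitz P f1 z = (\<Sum>n\<le>Suc 0. trig_coeffs x y w (int n - int 0) * z^n)"
        using sums_unique2[OF toeplitz_mono_sums[of x y w 0 z] s2] unfolding P_def f1_def .
      then show ?thesis using trig_sum[of x y w 0 "\<lambda>n. z^n"] by simp
    qed
    have pi: "psi_fun a z * cnj (psi_fun a (cnj (theta_fun a z))) = 1" by (rule psi_inv[OF a zz])
    have "C_psi_theta a (S (C_psi_theta a f1)) z = psi_fun a z * cnj (S (psi_fun a) (cnj (theta_fun a z)))"
      unfolding Cf1 by (simp add: C_psi_theta_def)
    also have "\<dots> = psi_fun a z * (s * (y + w * a + x * theta_fun a z) / (1 - a * theta_fun a z))"
      by (simp add: Sval[OF v] cs_s b_def)
    also have "\<dots> = (y + w * a + x * theta_fun a z) * (psi_fun a z * cnj (psi_fun a (cnj (theta_fun a z))))"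
      by (simp add: psi_fun_def s_def)
    also have "\<dots> = y + w * a + x * theta_fun a z" using pi by simp
    moreover have "f1 \<in> H2" unfolding f1_def by (rule mono_H2)
    ultimately show ?thesis using sym[of f1 z] z T1 by simp
  qed
  have ab: "cnj a * a = complex_of_real ((cmod a)^2)" using complex_norm_square[of a] by (simp add: mult.commute)
  have ca: "cnj a \<noteq> 0" using a by simp
  have "theta_fun a 0 = cnj a" using a by (simp add: theta_fun_def)
  then have k0: "w * a + x * cnj a = 0" using key[of 0] a by simp
  define D where "D = 1 + (cmod a)^2"
  have Dpos: "D > 0" unfolding D_def by (simp add: add_pos_nonneg)
  have th: "theta_fun a (-a) = 2 * cnj a / complex_of_real D"
  proof -
    have "theta_fun a (-a) = (cnj a / a) * (2 * a / (1 + cnj a * a))" by (simp add: theta_fun_def)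
    also have "\<dots> = 2 * cnj a / complex_of_real D" unfolding ab D_def using a(2) by (simp add: field_simps)
    finally show ?thesis .
  qed
  have cth: "cnj (theta_fun a (-a)) = 2 * a / complex_of_real D" unfolding th by simp
  have "cmod (2 * a / complex_of_real D) = 2 * cmod a / D" using Dpos by (simp add: norm_divide)
  also have "\<dots> < 1"
  proof -
    have "0 < (1 - cmod a)^2" using a by simp
    then have "2 * cmod a < D" unfolding D_def by (simp add: power2_eq_square algebra_simps)
    then show ?thesis using Dpos by simp
  qed
  finally have vin: "cnj (theta_fun a (-a)) \<in> ball 0 1" unfolding cth by simp
  have "-a \<in> ball 0 1" using a by simp
  from key[OF this vin] have k1: "2 * (w * a) + x * (2 * cnj a / complex_of_real D) = 0"
    unfolding th by (simp add: algebra_simps)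
  have Dn: "complex_of_real D \<noteq> 0" using Dpos by simp
  have "x * cnj a * (2 / complex_of_real D - 2) = 0"
  proof -
    have "w * a = - (x * cnj a)" using k0 by (simp add: eq_neg_iff_add_eq_0)
    then have "2 * (- (x * cnj a)) + x * (2 * cnj a / complex_of_real D) = 0" using k1 by simp
    then show ?thesis by (simp add: algebra_simps)
  qed
  moreover have "2 / complex_of_real D - 2 \<noteq> 0"
  proof
    assume "2 / complex_of_real D - 2 = 0"
    then have "complex_of_real D = 1" using Dn by (simp add: field_simps)
    then have "D = 1" by (metis of_real_eq_1_iff)
    then show False using a unfolding D_def by simp
  qed
  ultimately have x0: "x = 0" using ca by simp
  then have "w = 0" using k0 a(2) by simp
  with x0 show ?thesis by simp
qed

theorem proposition8p4:
  fixes \<alpha> phim1 phi0 phi1 :: complex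
  assumes "\<alpha> \<in> ball 0 1" and "\<alpha> \<noteq> 0"
  shows "C_symmetric (C_psi_theta \<alpha>) (toeplitz (trig_coeffs phim1 phi0 phi1))
     \<longleftrightarrow> (\<exists>c. \<forall>z. cmod z = 1 \<longrightarrow> phim1 * cnj z + phi0 + phi1 * z = c)"
proof
  have a: "cmod \<alpha> < 1" using assms(1) by simp
  assume "C_symmetric (C_psi_theta \<alpha>) (toeplitz (trig_coeffs phim1 phi0 phi1))"
  from forward[OF a assms(2) this] have "phim1 = 0" "phi1 = 0" by auto
  then show "\<exists>c. \<forall>z. cmod z = 1 \<longrightarrow> phim1 * cnj z + phi0 + phi1 * z = c" by auto
next
  have a: "cmod \<alpha> < 1" using assms(1) by simp
  assume "\<exists>c. \<forall>z. cmod z = 1 \<longrightarrow> phim1 * cnj z + phi0 + phi1 * z = c"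
  then obtain c where c: "\<And>z. cmod z = 1 \<Longrightarrow> phim1 * cnj z + phi0 + phi1 * z = c" by blast
  have e1: "phim1 + phi0 + phi1 = c" using c[of 1] by simp
  have e2: "- phim1 + phi0 - phi1 = c" using c[of "-1"] by simp
  have e3: "- \<i> * phim1 + phi0 + \<i> * phi1 = c" using c[of "\<i>"] by (simp add: mult.commute)
  have e4: "\<i> * phim1 + phi0 - \<i> * phi1 = c" using c[of "-\<i>"] by (simp add: mult.commute)
  have "2 * (phim1 + phi1) = 0" using e1 e2 by (simp add: algebra_simps)
  then have s1: "phim1 + phi1 = 0" by (metis mult_eq_0_iff zero_neq_numeral)
  have "(2 * \<i>) * (phi1 - phim1) = (- \<i> * phim1 + phi0 + \<i> * phi1) - (\<i> * phim1 + phi0 - \<i> * phi1)"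
    by (simp add: algebra_simps)
  also have "\<dots> = 0" using e3 e4 by simp
  finally have "(2 * \<i>) * (phi1 - phim1) = 0" .
  moreover have "2 * \<i> \<noteq> 0" by simp
  ultimately have s2: "phi1 = phim1" by simp
  have z: "phim1 = 0" "phi1 = 0" using s1 s2 by auto
  show "C_symmetric (C_psi_theta \<alpha>) (toeplitz (trig_coeffs phim1 phi0 phi1))"
    unfolding z by (rule backward[OF a assms(2)])
qed

end
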